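(* Consider the hybrid network model described in the context with $\bm u\equiv \bm 0$. Assume $|\phi(\cdot)|\le\phi_{max}$ and $$c_n>d^{in}\max\{\overline a^+,|\underline a^-|\}.$$ Then the neuronal state equation $$\dot{\bm x}=-C_n\bm x+\Gamma(A(t)\bm x),$$ with the piecewise constant weight matrix $A(t)$ generated by the weight update rule, is asymptotically stable: the origin is stable and every solution $\bm x(t)$ tends to $\bm 0$ as $t\to\infty$.
   Context: Let $\mathcal G=(\mathcal V,\mathcal E)$ be a directed graph with $N=|\mathcal V|$ nodes. Its edge set is split into disjoint sets $\mathcal E^+$ (excitatory) and $\mathcal E^-$ (inhibitory) with $\mathcal E=\mathcal E^+\cup\mathcal E^-$. The edge $(j,i)$ goes from node $j$ to node $i$. Let $d^{in}$ be the maximum in-degree of $\mathcal G$. Constants are $c_n>0$, $0<c_a^+,c_a^-<1$, $\theta>0$, $\tau>0$, and bounds $\underline a^-<\overline a^-<0<\underline a^+<\overline a^+$. The function $\phi:\mathbb R\to\mathbb R$ is bounded. For a scalar $y$, the clipping function is $[y]_{\underline y}^{\overline y}=\overline y$ if $y>\overline y$, $y$ if $\underline y\le y\le \overline y$, and $\underline y$ if $y<\underline y$. The threshold activation is $\gamma_\theta(s)=s$ if $|s|>\theta$ and $\gamma_\theta(s)=0$ otherwise; $\Gamma$ denotes $\gamma_\theta$ applied componentwise. The model (hybrid neuron/connectome dynamics): for $t\in(p\tau,(p+1)\tau]$, $p=0,1,2,\dots$, $$\dot x_i(t)=-c_nx_i(t)+\gamma_\theta\Big(\sum_{(j,i)\in\mathcal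 E}a_{ij}(t)x_j(t)\Big)+b_iu_i(t).$$ The weights are constant on each such interval and given by $$a_{ij}(t)=\big[c_a^-a_{ij}(p\tau)-\phi(x_i(p\tau)x_j(p\tau))\big]_{\underline a^-}^{\overline a^-}\quad\text{for }(j,i)\in\mathcal E^-,$$ $$a_{ij}(t)=\big[c_a^+a_{ij}(p\tau)+\phi(x_i(p\tau)x_j(p\tau))\big]_{\underline a^+}^{\overline a^+}\quad\text{for }(j,i)\in\mathcal E^+.$$ In addition, $a_{ij}\equiv0$ for non-edges, and $a_{ii}=0$. In vector form: $\dot{\bm x}=-C_n\bm x+\Gamma(A(t)\bm x)+B\bm u$, with $A=[a_{ij}]$ and $C_n=c_nI$. *)

theory Defs
  imports "HOL-Analysis.Analysis"
begin

definition clip :: "real \<Rightarrow> real \<Rightarrow> real \<Rightarrow> real" where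
  "clip lo hi y = (if y > hi then hi else if y < lo then lo else y)"

definition gamma_th :: "real \<Rightarrow> real \<Rightarrow> real" where
  "gamma_th \<theta> s = (if \<bar>s\<bar> > \<theta> then s else 0)"

text \<open>Maximum in-degree of the graph with edge set E on the finite node type;
  an edge (j,i) goes from j to i.\<close>
definition max_indeg :: "('n::finite \<times> 'n) set \<Rightarrow> nat" where
  "max_indeg E = Max ((\<lambda>i. card {j. (j, i) \<in> E}) ` UNIV)"

text \<open>Weight matrices on successive intervals: weight_seq ... 0 = initial weights a(0);
  weight_seq ... (Suc p) = weights valid on the interval (p tau, (p+1) tau],
  computed from the weights a(p tau) (= weight_seq ... p) and the state x(p tau).
  Entry i j is a_ij.\<close>
primrec weight_seq ::
  "('n::finite \<times> 'n) set \<Rightarrow> ('n \<times> 'n) set \<Rightarrow> real \<Rightarrow> real \<Rightarrow> real \<Rightarrow> real \<Rightarrow> real \<Rightarrow> real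
   \<Rightarrow> (real \<Rightarrow> real) \<Rightarrow> real \<Rightarrow> ('n \<Rightarrow> 'n \<Rightarrow> real) \<Rightarrow> (real \<Rightarrow> real ^ 'n) \<Rightarrow> nat \<Rightarrow> 'n \<Rightarrow> 'n \<Rightarrow> real"
where
  "weight_seq Ep Em cap cam alp ahp alm ahm \<phi> \<tau> A0 x 0 = A0"
| "weight_seq Ep Em cap cam alp ahp alm ahm \<phi> \<tau> A0 x (Suc p) =
     (\<lambda>i j. if i = j then 0
        else if (j, i) \<in> Em then
          clip alm ahm (cam * weight_seq Ep Em cap cam alp ahp alm ahm \<phi> \<tau> A0 x p i j
                        - \<phi> (x (real p * \<tau>) $ i * x (real p * \<tau>) $ j))
        else if (j, i) \<in> Ep then
          clip alp ahp (cap * weight_seq Ep Em cap cam alp ahp alm ahm \<phi> \<tau> A0 x p i j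
                        + \<phi> (x (real p * \<tau>) $ i * x (real p * \<tau>) $ j))
        else 0)"

text \<open>Piecewise constant weight matrix A(t): for t in (p tau, (p+1) tau] it is
  weight_seq ... (Suc p), since then ceiling (t / tau) = p + 1.\<close>
definition weight_at ::
  "('n::finite \<times> 'n) set \<Rightarrow> ('n \<times> 'n) set \<Rightarrow> real \<Rightarrow> real \<Rightarrow> real \<Rightarrow> real \<Rightarrow> real \<Rightarrow> real
   \<Rightarrow> (real \<Rightarrow> real) \<Rightarrow> real \<Rightarrow> ('n \<Rightarrow> 'n \<Rightarrow> real) \<Rightarrow> (real \<Rightarrow> real ^ 'n) \<Rightarrow> real \<Rightarrow> 'n \<Rightarrow> 'n \<Rightarrow> real"
where
  "weight_at Ep Em cap cam alp ahp alm ahm \<phi> \<tau> A0 x t =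
     weight_seq Ep Em cap cam alp ahp alm ahm \<phi> \<tau> A0 x (Suc (nat (\<lceil>t / \<tau>\<rceil> - 1)))"

text \<open>x is a (Caratheodory) solution on [0,\<infinity>) of
  x_i' = -c_n x_i + gamma_theta (sum_j a_ij(t) x_j), with u = 0, in integral form.\<close>
definition is_solution ::
  "('n::finite \<times> 'n) set \<Rightarrow> ('n \<times> 'n) set \<Rightarrow> real \<Rightarrow> real \<Rightarrow> real \<Rightarrow> real \<Rightarrow> real \<Rightarrow> real \<Rightarrow> real
   \<Rightarrow> real \<Rightarrow> (real \<Rightarrow> real) \<Rightarrow> real \<Rightarrow> ('n \<Rightarrow> 'n \<Rightarrow> real) \<Rightarrow> (real \<Rightarrow> real ^ 'n) \<Rightarrow> bool"
where
  "is_solution Ep Em cn cap cam alp ahp alm ahm \<theta> \<phi> \<tau> A0 x \<longleftrightarrow>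
     (\<forall>t \<ge> 0. \<forall>i.
        ((\<lambda>s. - cn * x s $ i
               + gamma_th \<theta> (\<Sum>j\<in>UNIV. weight_at Ep Em cap cam alp ahp alm ahm \<phi> \<tau> A0 x s i j * x s $ j))
         has_integral (x t $ i - x 0 $ i)) {0..t})"

end

theory Submission imports Defs begin

definition mx :: "(real \<Rightarrow> real^'n::finite) \<Rightarrow> real \<Rightarrow> real" where
  "mx x t = Max (range (\<lambda>j. \<bar>x t $ j\<bar>))"

lemma mx_ge: "\<bar>x t $ j\<bar> \<le> mx x t"
  unfolding mx_def by (rule Max_ge) auto

lemma mx_nonneg: "0 \<le> mx x t"
  using mx_ge[of x t] by (meson abs_ge_zero order_trans)

lemma mx_attained: "\<exists>i. \<bar>x t $ i\<bar> = mx x t"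
proof -
  have "mx x t \<in> range (\<lambda>j. \<bar>x t $ j\<bar>)" unfolding mx_def by (rule Max_in) auto
  then show ?thesis by auto
qed

lemma mx_le_norm: "mx x t \<le> norm (x t)"
  using mx_attained[of x t] component_le_norm_cart by metis

lemma norm_le_mx: "norm (x t) \<le> real CARD('n) * mx x t" for x :: "real \<Rightarrow> real^'n::finite"
proof -
  have "norm (x t) \<le> (\<Sum>i\<in>UNIV. \<bar>x t $ i\<bar>)" by (rule norm_le_l1_cart)
  also have "\<dots> \<le> (\<Sum>i\<in>(UNIV::'n set). mx x t)" by (rule sum_mono) (rule mx_ge)
  finally show ?thesis by simp
qed

lemma continuous_on_Max_fam:
  fixes g :: "'a \<Rightarrow> real \<Rightarrow> real"
  assumes "finite A" "A \<noteq> {}" "\<And>j. j \<in> A \<Longrightarrow> continuous_on S (g j)"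
  shows "continuous_on S (\<lambda>t. Max ((\<lambda>j. g j t) ` A))"
  using assms
proof (induction A rule: finite_ne_induct)
  case (singleton x) then show ?case by simp
next
  case (insert a F)
  have "(\<lambda>t. Max ((\<lambda>j. g j t) ` insert a F)) = (\<lambda>t. max (g a t) (Max ((\<lambda>j. g j t) ` F)))"
    using insert by (auto simp: Max_insert)
  then show ?case using insert by (auto intro!: continuous_intros)
qed

lemma core:
  fixes x :: "real \<Rightarrow> real^'n::finite" and f :: "'n \<Rightarrow> real \<Rightarrow> real"
  assumes H1: "\<And>t i. t \<ge> 0 \<Longrightarrow> (f i has_integral (x t $ i - x 0 $ i)) {0..t}"
    and H2: "\<And>s i. s \<ge> 0 \<Longrightarrow> \<bar>f i s + cn * x s $ i\<bar> \<le> L * mx x s"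
    and L: "0 \<le> L" "L < cn"
  shows "\<And>t. t \<ge> 0 \<Longrightarrow> mx x t \<le> exp (- ((cn - L)/2) * t) * mx x 0"
proof -
  define k where "k = cn - L"
  have k: "k > 0" using L by (simp add: k_def)
  define N where "N t = exp (k/2 * t) * mx x t" for t
  have xeq: "x t $ i = x 0 $ i + integral {0..t} (f i)" if "t \<ge> 0" for t i
    using integral_unique[OF H1[OF that, of i]] by simp
  have contx: "continuous_on {0..T} (\<lambda>t. x t $ i)" if "T \<ge> 0" for T i
  proof -
    have "f i integrable_on {0..T}" using has_integral_integrable[OF H1[OF that]] .
    then have "continuous_on {0..T} (\<lambda>t. x 0 $ i + integral {0..t} (f i))"
      by (rule continuous_on_add[OF continuous_on_const indefinite_integral_continuous_1])
    then show ?thesis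
    proof (rule continuous_on_eq)
      fix t assume "t \<in> {0..T}"
      then show "x 0 $ i + integral {0..t} (f i) = x t $ i" using xeq[of t i] by simp
    qed
  qed
  have contM: "continuous_on {0..T} (mx x)" if "T \<ge> 0" for T
    unfolding mx_def
    by (rule continuous_on_Max_fam) (auto intro: continuous_on_rabs[OF contx[OF that]])
  have contN: "continuous_on {0..T} N" if "T \<ge> 0" for T
    unfolding N_def
    by (rule continuous_on_mult'[OF continuous_on_exp[OF continuous_on_mult'[OF continuous_on_const continuous_on_id]] contM[OF that]])
  have C: "\<exists>h. 0 < h \<and> h < ts \<and> N ts \<le> N (ts - h)" if ts: "ts > 0" and Mp: "mx x ts > 0" for ts
  proof -
    define Ms where "Ms = mx x ts"
    obtain i where i: "\<bar>x ts $ i\<bar> = Ms" using mx_attained Ms_def by metis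
    define \<sigma> where "\<sigma> = sgn (x ts $ i)"
    have sig: "\<sigma> * x ts $ i = Ms" "\<bar>\<sigma>\<bar> = 1"
      using i Mp Ms_def by (auto simp: \<sigma>_def sgn_if)
    define \<eta> where "\<eta> = k * Ms / (4 * (cn + L))"
    have eta: "\<eta> > 0" using k Mp L Ms_def by (simp add: \<eta>_def)
    obtain d1 where d1: "d1 > 0" "\<And>s. s \<in> {0..ts} \<Longrightarrow> dist s ts < d1 \<Longrightarrow> dist (x s $ i) (x ts $ i) < \<eta>"
      using contx[of ts i] ts eta unfolding continuous_on_iff by (metis atLeastAtMost_iff less_eq_real_def order_refl)
    obtain d2 where d2: "d2 > 0" "\<And>s. s \<in> {0..ts} \<Longrightarrow> dist s ts < d2 \<Longrightarrow> dist (mx x s) (mx x ts) < \<eta>"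
      using contM[of ts] ts eta unfolding continuous_on_iff by (metis atLeastAtMost_iff less_eq_real_def order_refl)
    define h where "h = min (min (d1/2) (d2/2)) (min (ts/2) (1/(2*k)))"
    have h: "0 < h" "h < ts" "h < d1" "h < d2" "h \<le> 1/(2*k)"
      using d1 d2 ts k by (auto simp: h_def)
    have int0: "f i integrable_on {0..ts}" using H1 ts by (meson has_integral_integrable less_eq_real_def)
    have intI: "f i integrable_on {ts-h..ts}"
      by (rule integrable_subinterval_real[OF int0]) (use h in auto)
    have comb: "integral {0..ts-h} (f i) + integral {ts-h..ts} (f i) = integral {0..ts} (f i)"
      by (rule Henstock_Kurzweil_Integration.integral_combine[OF _ _ int0]) (use h in auto)
    have diff: "x ts $ i - x (ts-h) $ i = integral {ts-h..ts} (f i)"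
      using comb xeq[of ts i] xeq[of "ts-h" i] h ts by auto
    define B where "B = - cn * (Ms - \<eta>) + L * (Ms + \<eta>)"
    have pt: "\<sigma> * f i s \<le> B" if s: "s \<in> {ts-h..ts}" for s
    proof -
      have s0: "s \<in> {0..ts}" "dist s ts < d1" "dist s ts < d2" using s h by (auto simp: dist_real_def)
      have a: "\<bar>x s $ i - x ts $ i\<bar> < \<eta>" using d1(2)[OF s0(1,2)] by (simp add: dist_real_def)
      have b: "mx x s \<le> Ms + \<eta>" using d2(2)[OF s0(1,3)] by (simp add: dist_real_def Ms_def)
      have c: "\<sigma> * x s $ i \<ge> Ms - \<eta>"
      proof -
        have "\<sigma> * x s $ i = \<sigma> * x ts $ i + \<sigma> * (x s $ i - x ts $ i)" by (simp add: algebra_simps)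
        moreover have "\<bar>\<sigma> * (x s $ i - x ts $ i)\<bar> < \<eta>" using a sig by (simp add: abs_mult)
        ultimately show ?thesis using sig by linarith
      qed
      have e: "\<bar>\<sigma> * (f i s + cn * x s $ i)\<bar> \<le> L * mx x s"
        using H2[of s i] s0 sig by (simp add: abs_mult)
      have "\<sigma> * f i s = - cn * (\<sigma> * x s $ i) + \<sigma> * (f i s + cn * x s $ i)" by (simp add: algebra_simps)
      also have "\<dots> \<le> - cn * (Ms - \<eta>) + L * mx x s"
      proof -
        have "cn * (Ms - \<eta>) \<le> cn * (\<sigma> * x s $ i)" using c L by (intro mult_left_mono) auto
        moreover have "\<sigma> * (f i s + cn * x s $ i) \<le> L * mx x s" using e by (rule abs_le_D1)
        ultimately show ?thesis by linarith
      qed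
      also have "\<dots> \<le> B"
      proof -
        have "L * mx x s \<le> L * (Ms + \<eta>)" using b L by (intro mult_left_mono) auto
        then show ?thesis unfolding B_def by linarith
      qed
      finally show ?thesis .
    qed
    have "integral {ts-h..ts} (\<lambda>s. \<sigma> * f i s) \<le> integral {ts-h..ts} (\<lambda>s. B)"
      by (rule integral_le) (use integrable_on_cmult_left[OF intI] pt in auto)
    then have "\<sigma> * (x ts $ i - x (ts-h) $ i) \<le> h * B"
      using h by (simp add: diff)
    then have "\<sigma> * x (ts-h) $ i \<ge> Ms - h * B" using sig by (simp add: algebra_simps)
    moreover have "Ms - h * B = Ms * (1 + 3*k*h/4)"
    proof -
      have "(cn + L) * \<eta> = k * Ms / 4" unfolding \<eta>_def using L by (simp add: field_simps)
      moreover have "B = - cn * Ms + L * Ms + (cn + L) * \<eta>" unfolding B_def by (simp add: algebra_simps)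
      ultimately have "B = - cn * Ms + L * Ms + k * Ms / 4" by simp
      also have "\<dots> = - (3/4) * k * Ms" unfolding k_def by (simp add: field_simps)
      finally have "B = - (3/4) * k * Ms" .
      then show ?thesis by (simp add: algebra_simps)
    qed
    moreover have "\<sigma> * x (ts-h) $ i \<le> mx x (ts - h)"
    proof -
      have "\<sigma> * x (ts-h) $ i \<le> \<bar>\<sigma> * x (ts-h) $ i\<bar>" by (rule abs_ge_self)
      also have "\<dots> = \<bar>x (ts-h) $ i\<bar>" using sig by (simp add: abs_mult)
      finally show ?thesis using mx_ge[of x "ts-h" i] by linarith
    qed
    ultimately have M2: "mx x (ts-h) \<ge> Ms * (1 + 3*k*h/4)" by linarith
    have ex: "exp (- (k/2*h)) \<ge> 1 - k/2*h" using exp_ge_add_one_self[of "- (k/2*h)"] by simp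
    have q: "(1 - k/2*h) * (1 + 3*k*h/4) \<ge> 1"
    proof -
      have "k*h \<le> 1/2" using h k by (simp add: field_simps)
      moreover have "k*h \<ge> 0" using h k by simp
      ultimately have sq: "(k*h)*(k*h) \<le> (k*h)*(1/2)" by (intro mult_left_mono) auto
      have "(1 - k/2*h) * (1 + 3*k*h/4) = 1 + (k*h)/4 - 3/8*((k*h)*(k*h))" by (simp add: field_simps)
      then show ?thesis using sq \<open>k*h \<ge> 0\<close> by linarith
    qed
    have "exp (- (k/2*h)) * (1 + 3*k*h/4) \<ge> 1"
    proof -
      have "0 \<le> 1 + 3*k*h/4" using h k by simp
      then have "(1 - k/2*h) * (1 + 3*k*h/4) \<le> exp (- (k/2*h)) * (1 + 3*k*h/4)"
        by (rule mult_right_mono[OF ex])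
      then show ?thesis using q by linarith
    qed
    then have "Ms \<le> exp (- (k/2*h)) * (Ms * (1 + 3*k*h/4))"
    proof -
      have "Ms * 1 \<le> Ms * (exp (- (k/2*h)) * (1 + 3*k*h/4))"
        using Mp Ms_def \<open>exp (- (k/2*h)) * (1 + 3*k*h/4) \<ge> 1\<close> by (intro mult_left_mono) auto
      then show ?thesis by (simp add: algebra_simps)
    qed
    also have "\<dots> \<le> exp (- (k/2*h)) * mx x (ts-h)" using M2 by simp
    finally have "exp (k/2*ts) * Ms \<le> exp (k/2*ts) * (exp (- (k/2*h)) * mx x (ts-h))" by simp
    also have "\<dots> = exp (k/2*(ts-h)) * mx x (ts-h)"
      by (simp add: exp_add[symmetric] algebra_simps)
    finally show ?thesis using h unfolding N_def Ms_def by blast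
  qed
  have D: "N t \<le> N 0" if t0: "t \<ge> 0" for t
  proof (rule ccontr)
    assume "\<not> N t \<le> N 0"
    then have lt: "N 0 < N t" by simp
    define c where "c = N t"
    define S where "S = {0..t} \<inter> N -` {c..}"
    have cl: "closed S" unfolding S_def by (rule continuous_closed_preimage[OF contN[OF t0]]) auto
    have ne: "t \<in> S" using t0 by (simp add: S_def c_def)
    have bb: "bdd_below S" unfolding S_def by (rule bdd_belowI[of _ 0]) auto
    define ts where "ts = Inf S"
    have tsS: "ts \<in> S" unfolding ts_def using closed_contains_Inf[OF _ bb cl] ne by blast
    have before: "N s < c" if "0 \<le> s" "s < ts" for s
    proof (rule ccontr)
      assume "\<not> N s < c"
      moreover have "s \<le> t" using that tsS by (auto simp: S_def)
      ultimately have "s \<in> S" using that by (auto simp: S_def)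
      then have "ts \<le> s" unfolding ts_def using bb by (rule cInf_lower)
      with that show False by simp
    qed
    have Nts: "c \<le> N ts" "0 \<le> ts" using tsS by (auto simp: S_def)
    have tspos: "ts > 0"
    proof (rule ccontr)
      assume "\<not> ts > 0" then have "ts = 0" using Nts by simp
      then show False using Nts lt c_def by simp
    qed
    have N0: "N 0 \<ge> 0" unfolding N_def using mx_nonneg[of x 0] by simp
    have "mx x ts > 0"
    proof -
      have "N ts > 0" using Nts lt N0 c_def by linarith
      then show ?thesis unfolding N_def using mx_nonneg[of x ts] by (simp add: zero_less_mult_iff)
    qed
    then obtain h where "0 < h" "h < ts" "N ts \<le> N (ts - h)" using C tspos by blast
    moreover have "N (ts - h) < c" using before[of "ts-h"] \<open>0<h\<close> \<open>h<ts\<close> by simp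
    ultimately show False using Nts by linarith
  qed
  fix t :: real assume "t \<ge> 0"
  then have "exp (k/2 * t) * mx x t \<le> mx x 0" using D[of t] by (simp add: N_def)
  then have "exp (- (k/2 * t)) * (exp (k/2 * t) * mx x t) \<le> exp (- (k/2*t)) * mx x 0"
    by (simp add: mult_left_mono)
  then show "mx x t \<le> exp (- ((cn - L)/2) * t) * mx x 0"
    by (simp add: k_def mult.assoc[symmetric] exp_add[symmetric])
qed

lemma clip_bounds: "lo \<le> hi \<Longrightarrow> lo \<le> clip lo hi y \<and> clip lo hi y \<le> hi"
  by (auto simp: clip_def)

lemma weight_bound:
  fixes Ep Em :: "('n::finite \<times> 'n) set"
  assumes bounds: "alm < ahm" "ahm < 0" "0 < alp" "alp < ahp"
  shows "\<bar>weight_seq Ep Em cap cam alp ahp alm ahm \<phi> \<tau> A0 x (Suc p) i j\<bar> \<le> max ahp \<bar>alm\<bar>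
     \<and> ((j, i) \<notin> Ep \<union> Em \<longrightarrow> weight_seq Ep Em cap cam alp ahp alm ahm \<phi> \<tau> A0 x (Suc p) i j = 0)"
proof -
  have cm: "\<forall>y. \<bar>clip alm ahm y\<bar> \<le> max ahp \<bar>alm\<bar>"
  proof
    fix y
    have "alm \<le> clip alm ahm y" "clip alm ahm y \<le> ahm" using clip_bounds[of alm ahm y] bounds by auto
    then have "\<bar>clip alm ahm y\<bar> \<le> \<bar>alm\<bar>" using bounds by (simp add: abs_if)
    then show "\<bar>clip alm ahm y\<bar> \<le> max ahp \<bar>alm\<bar>" by (simp add: le_max_iff_disj)
  qed
  have cp: "\<forall>y. \<bar>clip alp ahp y\<bar> \<le> max ahp \<bar>alm\<bar>"
  proof
    fix y
    have "alp \<le> clip alp ahp y" "clip alp ahp y \<le> ahp" using clip_bounds[of alp ahp y] bounds by auto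
    then have "\<bar>clip alp ahp y\<bar> \<le> ahp" using bounds by (simp add: abs_if)
    then show "\<bar>clip alp ahp y\<bar> \<le> max ahp \<bar>alm\<bar>" by (simp add: le_max_iff_disj)
  qed
  have a0: "0 \<le> max ahp \<bar>alm\<bar>" by (simp add: le_max_iff_disj)
  show ?thesis
  proof (cases "i = j")
    case True then show ?thesis using a0 by simp
  next
    case ij: False
    show ?thesis
    proof (cases "(j, i) \<in> Em")
      case True then show ?thesis using ij cm by simp
    next
      case nm: False
      show ?thesis
      proof (cases "(j, i) \<in> Ep")
        case True then show ?thesis using ij nm cp by simp
      next
        case False then show ?thesis using ij nm a0 by simp
      qed
    qed
  qed
qed

declare weight_seq.simps(2)[simp del]

lemma sum_bound:
  fixes Ep Em :: "('n::finite \<times> 'n) set" and v :: "real^'n"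
  assumes bounds: "alm < ahm" "ahm < 0" "0 < alp" "alp < ahp"
    and M: "\<And>j. \<bar>v $ j\<bar> \<le> M"
  shows "\<bar>\<Sum>j\<in>UNIV. weight_seq Ep Em cap cam alp ahp alm ahm \<phi> \<tau> A0 x (Suc p) i j * v $ j\<bar>
      \<le> real (max_indeg (Ep \<union> Em)) * max ahp \<bar>alm\<bar> * M"
proof -
  let ?w = "weight_seq Ep Em cap cam alp ahp alm ahm \<phi> \<tau> A0 x (Suc p) i"
  define J where "J = {j. (j, i) \<in> Ep \<union> Em}"
  define a where "a = max ahp \<bar>alm\<bar>"
  have M0: "0 \<le> M" using M[of undefined] by linarith
  have a0: "0 \<le> a" by (simp add: a_def le_max_iff_disj)
  have w0: "\<And>j. j \<notin> J \<Longrightarrow> ?w j = 0" using weight_bound[OF bounds] unfolding J_def by blast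
  have wa: "\<And>j. \<bar>?w j\<bar> \<le> a" using weight_bound[OF bounds] unfolding a_def by blast
  have eq: "(\<Sum>j\<in>UNIV. ?w j * v $ j) = (\<Sum>j\<in>J. ?w j * v $ j)"
    by (rule sum.mono_neutral_right) (simp_all add: w0)
  have "\<bar>\<Sum>j\<in>UNIV. ?w j * v $ j\<bar> = \<bar>\<Sum>j\<in>J. ?w j * v $ j\<bar>" by (simp only: eq)
  also have "\<dots> \<le> (\<Sum>j\<in>J. \<bar>?w j * v $ j\<bar>)" by (rule sum_abs)
  also have "\<dots> \<le> (\<Sum>j\<in>J. a * M)"
  proof (rule sum_mono)
    fix j
    show "\<bar>?w j * v $ j\<bar> \<le> a * M" unfolding abs_mult
      by (rule mult_mono[OF wa M a0 abs_ge_zero])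
  qed
  also have "\<dots> = real (card J) * (a * M)" by simp
  also have "\<dots> \<le> real (max_indeg (Ep \<union> Em)) * (a * M)"
  proof (rule mult_right_mono)
    have "card J \<le> max_indeg (Ep \<union> Em)" unfolding max_indeg_def J_def
      by (rule Max_ge[OF _ rangeI]) simp
    then show "real (card J) \<le> real (max_indeg (Ep \<union> Em))" by simp
    show "0 \<le> a * M" using M0 a0 by simp
  qed
  finally show ?thesis by (simp only: a_def mult.assoc)
qed

lemma gamma_abs: "\<bar>gamma_th \<theta> s\<bar> \<le> \<bar>s\<bar>"
  by (simp add: gamma_th_def)

theorem theorem1:
  fixes Ep Em :: "('n::finite \<times> 'n) set"
    and cn cap cam \<theta> \<tau> alp ahp alm ahm \<phi>max :: real
    and \<phi> :: "real \<Rightarrow> real"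
  assumes disj: "Ep \<inter> Em = {}"
    and cn: "cn > 0"
    and cap: "0 < cap" "cap < 1"
    and cam: "0 < cam" "cam < 1"
    and th: "\<theta> > 0"
    and tau: "\<tau> > 0"
    and bounds: "alm < ahm" "ahm < 0" "0 < alp" "alp < ahp"
    and phi_bd: "\<And>s. \<bar>\<phi> s\<bar> \<le> \<phi>max"
    and gain: "cn > real (max_indeg (Ep \<union> Em)) * max ahp \<bar>alm\<bar>"
  shows "(\<forall>\<epsilon>>0. \<exists>\<delta>>0. \<forall>A0 x.
            is_solution Ep Em cn cap cam alp ahp alm ahm \<theta> \<phi> \<tau> A0 x \<and> norm (x 0) < \<delta>
            \<longrightarrow> (\<forall>t\<ge>0. norm (x t) < \<epsilon>))
       \<and> (\<forall>A0 x. is_solution Ep Em cn cap cam alp ahp alm ahm \<theta> \<phi> \<tau> A0 x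
            \<longrightarrow> (x \<longlongrightarrow> 0) at_top)"
proof -
  define L where "L = real (max_indeg (Ep \<union> Em)) * max ahp \<bar>alm\<bar>"
  have L0: "0 \<le> L" unfolding L_def by simp
  have Lc: "L < cn" using gain by (simp add: L_def)
  have dec: "\<And>t. t \<ge> 0 \<Longrightarrow> mx x t \<le> exp (- ((cn - L)/2) * t) * mx x 0"
    if sol: "is_solution Ep Em cn cap cam alp ahp alm ahm \<theta> \<phi> \<tau> A0 x" for A0 x
  proof -
    define f where "f i s = - cn * x s $ i
               + gamma_th \<theta> (\<Sum>j\<in>UNIV. weight_at Ep Em cap cam alp ahp alm ahm \<phi> \<tau> A0 x s i j * x s $ j)" for i s
    show "\<And>t. t \<ge> 0 \<Longrightarrow> mx x t \<le> exp (- ((cn - L)/2) * t) * mx x 0"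
    proof (rule core[where f = f])
      show "(f i has_integral (x t $ i - x 0 $ i)) {0..t}" if "t \<ge> 0" for t i
        using sol that unfolding is_solution_def f_def by blast
      show "\<bar>f i s + cn * x s $ i\<bar> \<le> L * mx x s" if "s \<ge> 0" for s i
      proof -
        have "\<bar>f i s + cn * x s $ i\<bar> = \<bar>gamma_th \<theta> (\<Sum>j\<in>UNIV. weight_at Ep Em cap cam alp ahp alm ahm \<phi> \<tau> A0 x s i j * x s $ j)\<bar>"
          by (simp add: f_def)
        also have "\<dots> \<le> \<bar>\<Sum>j\<in>UNIV. weight_at Ep Em cap cam alp ahp alm ahm \<phi> \<tau> A0 x s i j * x s $ j\<bar>"
          by (rule gamma_abs)
        also have "\<dots> \<le> L * mx x s" unfolding weight_at_def L_def
          by (rule sum_bound[OF bounds]) (rule mx_ge)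
        finally show ?thesis .
      qed
    qed (use L0 Lc in auto)
  qed
  have card: "real CARD('n) \<ge> 1" by simp
  show ?thesis
  proof (intro conjI allI impI)
    fix \<epsilon> :: real assume e: "\<epsilon> > 0"
    show "\<exists>\<delta>>0. \<forall>A0 x. is_solution Ep Em cn cap cam alp ahp alm ahm \<theta> \<phi> \<tau> A0 x \<and> norm (x 0) < \<delta>
            \<longrightarrow> (\<forall>t\<ge>0. norm (x t) < \<epsilon>)"
    proof (intro exI[of _ "\<epsilon> / real CARD('n)"] conjI allI impI)
      show "\<epsilon> / real CARD('n) > 0" using e by simp
      fix A0 x t assume H: "is_solution Ep Em cn cap cam alp ahp alm ahm \<theta> \<phi> \<tau> A0 x \<and> norm (x 0) < \<epsilon> / real CARD('n)"
        and t: "(t::real) \<ge> 0"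
      have "mx x t \<le> exp (- ((cn - L)/2) * t) * mx x 0" using dec[of A0 x t] H t by blast
      also have "\<dots> \<le> 1 * mx x 0"
        using mx_nonneg[of x 0] Lc t by (intro mult_right_mono) auto
      also have "\<dots> \<le> norm (x 0)" using mx_le_norm[of x 0] by simp
      finally have "real CARD('n) * mx x t \<le> real CARD('n) * norm (x 0)" by simp
      also have "\<dots> < real CARD('n) * (\<epsilon> / real CARD('n))"
        using H card by (intro mult_strict_left_mono) auto
      also have "\<dots> = \<epsilon>" using card by simp
      finally show "norm (x t) < \<epsilon>" using norm_le_mx[of x t] by linarith
    qed
  next
    fix A0 x assume H: "is_solution Ep Em cn cap cam alp ahp alm ahm \<theta> \<phi> \<tau> A0 x"
    define c where "c = (cn - L)/2"
    have c: "c > 0" using Lc by (simp add: c_def)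
    have "filterlim (\<lambda>t. (- c) * t) at_bot at_top"
      by (rule filterlim_tendsto_neg_mult_at_bot[OF tendsto_const]) (use c in \<open>auto intro: filterlim_ident\<close>)
    then have "((\<lambda>t. exp ((- c) * t)) \<longlongrightarrow> 0) at_top"
      by (rule filterlim_compose[OF exp_at_bot])
    then have g: "((\<lambda>t. real CARD('n) * (exp ((- c) * t) * mx x 0)) \<longlongrightarrow> 0) at_top"
      by (intro tendsto_mult_right_zero tendsto_mult_left_zero)
    show "(x \<longlongrightarrow> 0) at_top"
    proof (rule Lim_null_comparison[OF _ g])
      show "\<forall>\<^sub>F t in at_top. norm (x t) \<le> real CARD('n) * (exp ((- c) * t) * mx x 0)"
        unfolding eventually_at_top_linorder
      proof (intro exI[of _ 0] allI impI)
        fix t :: real assume t: "t \<ge> 0"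
        have "norm (x t) \<le> real CARD('n) * mx x t" by (rule norm_le_mx)
        also have "\<dots> \<le> real CARD('n) * (exp ((- c) * t) * mx x 0)"
          using dec[OF H t] by (intro mult_left_mono) (auto simp: c_def)
        finally show "norm (x t) \<le> real CARD('n) * (exp ((- c) * t) * mx x 0)" .
      qed
    qed
  qed
qed

end
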